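(* Let $e_1,e_2,e_3$ be nonzero integers with $e_1+e_2+e_3=0$, $2\,\|\,e_1$, $2\,\|\,e_2$, $4\mid e_3$. Let $n$ be an odd positive square-free integer and $\Lambda=(d_1,d_2,d_3)$ with $d_1,d_2,d_3$ odd square-free divisors of $e_1e_2e_3n$ and $d_1d_2d_3$ a square. If $D^{(n)}_\Lambda(\mathbb{Q}_2)\ne\emptyset$, then $d_3\equiv 1\pmod 4$.
   Context: $D^{(n)}_\Lambda\subset\mathbb{P}^3$ (coordinates $(t,u_1,u_2,u_3)$) is defined by $e_1nt^2+d_2u_2^2-d_3u_3^2=0$, $e_2nt^2+d_3u_3^2-d_1u_1^2=0$, $e_3nt^2+d_1u_1^2-d_2u_2^2=0$. $2\,\|\,m$ means $2\mid m$, $4\nmid m$. *)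

theory Defs
  imports "HOL-Computational_Algebra.Computational_Algebra" "HOL-Number_Theory.Number_Theory"
begin

text \<open>p-adic integers as the inverse limit of Z/p^k: a compatible sequence of residues
  x k in {0..<p^k}.\<close>
definition padic_int :: "int \<Rightarrow> (nat \<Rightarrow> int) \<Rightarrow> bool" where
  "padic_int p x \<longleftrightarrow> (\<forall>k. 0 \<le> x k \<and> x k < p ^ k) \<and> (\<forall>k. x (Suc k) mod p ^ k = x k)"

definition D_eqs :: "int \<Rightarrow> int \<Rightarrow> int \<Rightarrow> int \<Rightarrow> int \<Rightarrow> int \<Rightarrow>
                     int \<Rightarrow> int \<Rightarrow> int \<Rightarrow> int \<Rightarrow> int \<Rightarrow> int \<Rightarrow> bool" where
  "D_eqs m e1 e2 e3 n d1 d2 d3 t u1 u2 u3 \<longleftrightarrow>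
     [e1 * n * t^2 + d2 * u2^2 - d3 * u3^2 = 0] (mod m) \<and>
     [e2 * n * t^2 + d3 * u3^2 - d1 * u1^2 = 0] (mod m) \<and>
     [e3 * n * t^2 + d1 * u1^2 - d2 * u2^2 = 0] (mod m)"

text \<open>D^(n)_Lambda(Q_p) is nonempty: since the equations are homogeneous, a Q_p-point of P^3
  is the same as a nonzero solution (t,u1,u2,u3) in Z_p^4 (clear denominators).\<close>
definition D_Qp_nonempty :: "int \<Rightarrow> int \<Rightarrow> int \<Rightarrow> int \<Rightarrow> int \<Rightarrow> int \<Rightarrow> int \<Rightarrow> int \<Rightarrow> bool" where
  "D_Qp_nonempty p e1 e2 e3 n d1 d2 d3 \<longleftrightarrow>
     (\<exists>t u1 u2 u3. padic_int p t \<and> padic_int p u1 \<and> padic_int p u2 \<and> padic_int p u3 \<and>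
        (\<exists>k. t k \<noteq> 0 \<or> u1 k \<noteq> 0 \<or> u2 k \<noteq> 0 \<or> u3 k \<noteq> 0) \<and>
        (\<forall>k. D_eqs (p ^ k) e1 e2 e3 n d1 d2 d3 (t k) (u1 k) (u2 k) (u3 k)))"

end

theory Submission
  imports Defs
begin

lemma m41: "(4*c+1) mod 4 = (1::int)" by presburger
lemma m42: "(4*c+2) mod 4 = (2::int)" by presburger

lemma sq_mod4: fixes x :: int shows "(even x \<and> (x^2) mod 4 = 0) \<or> (odd x \<and> x^2 mod 4 = 1)"
proof (cases "even x")
  case True then obtain a where "x = 2*a" by blast
  then show ?thesis by (simp add: power2_eq_square)
next
  case False then obtain a where "x = 2*a+1" by (rule oddE)
  then have "x^2 = 4*(a*a+a) + 1" by (simp add: power2_eq_square algebra_simps)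
  then have "x^2 mod 4 = 1" using m41 by metis
  then show ?thesis using False by simp
qed

lemma dsq_mod4: fixes x d :: int
  shows "(even x \<and> (d*x^2) mod 4 = 0) \<or> (odd x \<and> (d*x^2) mod 4 = d mod 4)"
proof -
  have e: "(d*x^2) mod 4 = (d mod 4 * (x^2 mod 4)) mod 4" by (simp add: mod_mult_eq)
  from sq_mod4[of x] show ?thesis
  proof
    assume "even x \<and> x^2 mod 4 = 0" then show ?thesis using e by auto
  next
    assume h: "odd x \<and> x^2 mod 4 = 1"
    then show ?thesis using e by simp
  qed
qed

lemma odd_mod4: "odd (d::int) \<Longrightarrow> d mod 4 = 1 \<or> d mod 4 = 3" by presburger

lemma modlin: fixes A P Q :: int shows "(A + P - Q) mod 4 = (A mod 4 + P mod 4 - Q mod 4) mod 4"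
proof -
  have "(A mod 4 + P mod 4 - Q mod 4) mod 4 = ((A mod 4 + P mod 4) mod 4 - Q mod 4) mod 4"
    by (simp add: mod_diff_left_eq)
  also have "... = ((A + P) mod 4 - Q mod 4) mod 4" by (simp add: mod_add_eq)
  also have "... = (A + P - Q) mod 4" by (simp add: mod_diff_eq)
  finally show ?thesis by simp
qed

lemma lin_core:
  fixes Am Bm Q1 Q2 Q3 r1 r2 r3 :: int
  assumes "(Am + Q2 - Q3) mod 4 = 0" "(Bm + Q3 - Q1) mod 4 = 0"
    "(a \<and> Am = 0 \<and> Bm = 0) \<or> (\<not>a \<and> Am = 2 \<and> Bm = 2)"
    "(x1 \<and> Q1 = 0) \<or> (\<not>x1 \<and> Q1 = r1)"
    "(x2 \<and> Q2 = 0) \<or> (\<not>x2 \<and> Q2 = r2)"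
    "(x3 \<and> Q3 = 0) \<or> (\<not>x3 \<and> Q3 = r3)"
    "r1 = 1 \<or> r1 = 3" "r2 = 1 \<or> r2 = 3" "r3 = 1 \<or> r3 = 3"
  shows "(\<not>x1 \<and> \<not>x2 \<and> \<not>x3) \<or> (x1 \<and> x2 \<and> x3)"
  using assms by (elim disjE conjE; simp)

lemma lin_core2:
  fixes Am Q1 Q2 r1 r2 :: int
  assumes "(Am + Q1 - Q2) mod 4 = 0" "Am = 0" "Q1 = r1" "Q2 = r2"
    "r1 = 1 \<or> r1 = 3" "r2 = 1 \<or> r2 = 3"
  shows "r1 = r2"
  using assms by (elim disjE conjE; simp)

lemma lin_core3:
  fixes Am Q1 Q2 :: int
  assumes "(Am + Q1 - Q2) mod 4 = 0" "Am = 2" "Q1 = 0" "Q2 = 0"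
  shows False
  using assms by simp

lemma core4:
  fixes e1 e2 e3 n d1 d2 d3 t u1 u2 u3 :: int
  assumes "2 dvd e1" "\<not> 4 dvd e1" "2 dvd e2" "\<not> 4 dvd e2" "4 dvd e3"
    and "odd n" "odd d1" "odd d2" "odd d3" "[d1*d2*d3 = 1] (mod 4)"
    and E1: "4 dvd e1 * n * t^2 + d2 * u2^2 - d3 * u3^2"
    and E2: "4 dvd e2 * n * t^2 + d3 * u3^2 - d1 * u1^2"
    and E3: "4 dvd e3 * n * t^2 + d1 * u1^2 - d2 * u2^2"
    and nz: "odd t \<or> odd u1 \<or> odd u2 \<or> odd u3"
  shows "[d3 = 1] (mod 4)"
proof -
  have "4 dvd e3*n*t^2" using assms(5) by simp
  then have c3: "(e3*n*t^2) mod 4 = 0" by (rule dvd_imp_mod_0)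
  have ct: "(even t \<and> (e1*n*t^2) mod 4 = 0 \<and> (e2*n*t^2) mod 4 = 0) \<or>
            (odd t \<and> (e1*n*t^2) mod 4 = 2 \<and> (e2*n*t^2) mod 4 = 2)"
  proof -
    have m: "(e*n*t^2) mod 4 = 2" if "2 dvd e" "\<not> 4 dvd e" "odd t" for e
    proof -
      from that(1) obtain a where a: "e = 2*a" by (rule dvdE)
      have "odd a"
      proof
        assume "even a"
        then obtain c where "a = 2*c" by blast
        then have "e = 4*c" using a by simp
        then show False using that(2) by simp
      qed
      then have "odd (a*n*t^2)" using assms(6) that(3) by simp
      then obtain b where b: "a*n*t^2 = 2*b+1" by (rule oddE)
      have "e*n*t^2 = 2*(a*n*t^2)" using a by simp
      also have "... = 4*b+2" using b by simp
      finally have "e*n*t^2 = 4*b+2" .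
      then show ?thesis using m42[of b] by simp
    qed
    show ?thesis
    proof (cases "even t")
      case True then obtain a where a: "t = 2*a" by blast
      have "e1*n*t^2 = 4*(e1*n*a^2)" "e2*n*t^2 = 4*(e2*n*a^2)" using a by (simp_all add: power_mult_distrib)
      then show ?thesis using True by (metis mod_mult_self2_is_0 mult.commute)
    next
      case False then show ?thesis using m[OF assms(1,2) False] m[OF assms(3,4) False] by blast
    qed
  qed
  note c1 = dsq_mod4[of u1 d1]
  note c2 = dsq_mod4[of u2 d2]
  note c33 = dsq_mod4[of u3 d3]
  note o = odd_mod4[OF assms(7)] odd_mod4[OF assms(8)] odd_mod4[OF assms(9)]
  have F1: "((e1*n*t^2) mod 4 + (d2*u2^2) mod 4 - (d3*u3^2) mod 4) mod 4 = 0"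
    by (subst modlin[symmetric]) (use E1 in simp)
  have F2: "((e2*n*t^2) mod 4 + (d3*u3^2) mod 4 - (d1*u1^2) mod 4) mod 4 = 0"
    by (subst modlin[symmetric]) (use E2 in simp)
  have F3: "((e3*n*t^2) mod 4 + (d1*u1^2) mod 4 - (d2*u2^2) mod 4) mod 4 = 0"
    by (subst modlin[symmetric]) (use E3 in simp)
  have par: "(odd u1 \<and> odd u2 \<and> odd u3) \<or> (even u1 \<and> even u2 \<and> even u3)"
    using lin_core[OF F1 F2 ct c1 c2 c33 o] by blast
  then show ?thesis
  proof
    assume h: "odd u1 \<and> odd u2 \<and> odd u3"
    have "d1 mod 4 = d2 mod 4"
      by (rule lin_core2[OF F3 c3]) (use c1 c2 h o in auto)
    then have "[d1 = d2] (mod 4)" unfolding cong_def .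
    then have "[d1*d2*d3 = d1*d1*d3] (mod 4)" by (intro cong_mult cong_refl) (simp add: cong_sym)
    moreover have "[d1*d1 = 1] (mod 4)" using sq_mod4[of d1] assms(7) unfolding cong_def
      by (simp add: power2_eq_square)
    then have "[d1*d1*d3 = 1*d3] (mod 4)" by (intro cong_mult cong_refl)
    then have "[d1*d1*d3 = d3] (mod 4)" by simp
    ultimately have "[d1*d2*d3 = d3] (mod 4)" by (rule cong_trans)
    then have "[d3 = d1*d2*d3] (mod 4)" by (rule cong_sym)
    then show ?thesis using assms(10) by (rule cong_trans)
  next
    assume h: "even u1 \<and> even u2 \<and> even u3"
    then have "odd t" using nz by auto
    then show ?thesis using lin_core3[OF F1] ct c2 c33 h by blast
  qed
qed

lemma padic_compat:
  assumes "padic_int p x" shows "x (k + m) mod p ^ k = x k"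
proof (induction m)
  case 0
  have "0 \<le> x k" "x k < p ^ k" using assms unfolding padic_int_def by auto
  then have "x k mod p ^ k = x k" by (rule mod_pos_pos_trivial)
  then show ?case by simp
next
  case (Suc m)
  have d: "p ^ k dvd p ^ (k + m)" by (simp add: le_imp_power_dvd)
  have "x (k + Suc m) mod p ^ k = (x (Suc (k + m)) mod p ^ (k + m)) mod p ^ k"
    using mod_mod_cancel[OF d] by simp
  also have "... = x (k + m) mod p ^ k" using assms unfolding padic_int_def by simp
  finally show ?case using Suc by simp
qed

lemma padic_zero: assumes "padic_int p x" shows "x 0 = 0"
proof -
  have "0 \<le> x 0" "x 0 < p ^ 0" using assms unfolding padic_int_def by blast+
  then show ?thesis by simp
qed

lemma scale_eq:
  fixes a b d c X Y Z :: int
  assumes "[a*(c*X)^2 + b*(c*Y)^2 - d*(c*Z)^2 = 0] (mod (c^2*4))" "c \<noteq> 0"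
  shows "4 dvd a*X^2 + b*Y^2 - d*Z^2"
proof -
  have "a*(c*X)^2 + b*(c*Y)^2 - d*(c*Z)^2 = c^2 * (a*X^2 + b*Y^2 - d*Z^2)"
    by (simp add: algebra_simps power_mult_distrib)
  then have "c^2 * 4 dvd c^2 * (a*X^2 + b*Y^2 - d*Z^2)" using assms(1) by (simp add: cong_0_iff)
  then show ?thesis using assms(2) by simp
qed

lemma level:
  assumes "padic_int 2 x" "x v = 0"
  obtains Y where "x (2*v+2) = 2^v * Y" "x (Suc v) \<noteq> 0 \<Longrightarrow> odd Y"
proof -
  have "x (v + (v+2)) mod 2^v = x v" by (rule padic_compat[OF assms(1)])
  then have "2^v dvd x (2*v+2)" using assms(2) by (simp add: mult_2 dvd_eq_mod_eq_0 add.assoc)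
  then obtain Y where Y: "x (2*v+2) = 2^v * Y" by (rule dvdE)
  have h: "x (Suc v + (v+1)) mod 2^(Suc v) = x (Suc v)" by (rule padic_compat[OF assms(1)])
  have "odd Y" if nz: "x (Suc v) \<noteq> 0"
  proof
    assume "even Y"
    then obtain c where "Y = 2*c" by blast
    then have "x (2*v+2) = 2^(Suc v) * c" using Y by simp
    then have z: "x (2*v+2) mod 2^(Suc v) = 0" by simp
    have e: "Suc v + (v+1) = 2*v+2" by simp
    have h': "x (2*v+2) mod 2^(Suc v) = x (Suc v)" using h unfolding e .
    show False using h' z nz by argo
  qed
  then show ?thesis using that Y by blast
qed

theorem lemma4p1:
  fixes e1 e2 e3 n d1 d2 d3 :: int
  assumes "e1 \<noteq> 0" "e2 \<noteq> 0" "e3 \<noteq> 0" "e1 + e2 + e3 = 0"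
    and "2 dvd e1" "\<not> 4 dvd e1" "2 dvd e2" "\<not> 4 dvd e2" "4 dvd e3"
    and "n > 0" "odd n" "squarefree n"
    and "odd d1" "squarefree d1" "d1 dvd e1 * e2 * e3 * n"
    and "odd d2" "squarefree d2" "d2 dvd e1 * e2 * e3 * n"
    and "odd d3" "squarefree d3" "d3 dvd e1 * e2 * e3 * n"
    and "\<exists>m::int. d1 * d2 * d3 = m ^ 2"
    and "D_Qp_nonempty 2 e1 e2 e3 n d1 d2 d3"
  shows "[d3 = 1] (mod 4)"
proof -
  obtain t u1 u2 u3 where pt: "padic_int 2 t" and p1: "padic_int 2 u1" and p2: "padic_int 2 u2"
    and p3: "padic_int 2 u3" and ex: "\<exists>k. t k \<noteq> 0 \<or> u1 k \<noteq> 0 \<or> u2 k \<noteq> 0 \<or> u3 k \<noteq> 0"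
    and eqs: "\<And>k. D_eqs (2 ^ k) e1 e2 e3 n d1 d2 d3 (t k) (u1 k) (u2 k) (u3 k)"
    using assms(23) unfolding D_Qp_nonempty_def by blast
  define P where "P = (\<lambda>k. t k \<noteq> 0 \<or> u1 k \<noteq> 0 \<or> u2 k \<noteq> 0 \<or> u3 k \<noteq> 0)"
  define j where "j = (LEAST k. P k)"
  have Pj: "P j" unfolding j_def using ex LeastI_ex[of P] P_def by blast
  have "j \<noteq> 0"
  proof
    assume j0: "j = 0"
    have "P 0" using Pj unfolding j0 .
    then show False using padic_zero[OF pt] padic_zero[OF p1] padic_zero[OF p2] padic_zero[OF p3]
      unfolding P_def by blast
  qed
  then obtain v where jv: "j = Suc v" by (cases j) auto
  have "\<not> P v" unfolding j_def using not_less_Least[of v P] jv j_def by simp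
  then have z: "t v = 0" "u1 v = 0" "u2 v = 0" "u3 v = 0" unfolding P_def by auto
  obtain T where T: "t (2*v+2) = 2^v * T" "t (Suc v) \<noteq> 0 \<Longrightarrow> odd T" using level[OF pt z(1)] by blast
  obtain U1 where U1: "u1 (2*v+2) = 2^v * U1" "u1 (Suc v) \<noteq> 0 \<Longrightarrow> odd U1" using level[OF p1 z(2)] by blast
  obtain U2 where U2: "u2 (2*v+2) = 2^v * U2" "u2 (Suc v) \<noteq> 0 \<Longrightarrow> odd U2" using level[OF p2 z(3)] by blast
  obtain U3 where U3: "u3 (2*v+2) = 2^v * U3" "u3 (Suc v) \<noteq> 0 \<Longrightarrow> odd U3" using level[OF p3 z(4)] by blast
  have nz: "odd T \<or> odd U1 \<or> odd U2 \<or> odd U3" using Pj T U1 U2 U3 jv unfolding P_def by blast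
  have K: "(2::int) ^ (2*v+2) = (2^v)^2 * 4"
    by (simp add: power_add power_mult[symmetric] mult.commute)
  have D: "D_eqs ((2^v)^2 * 4) e1 e2 e3 n d1 d2 d3 (2^v * T) (2^v * U1) (2^v * U2) (2^v * U3)"
    using eqs[of "2*v+2"] unfolding K T(1) U1(1) U2(1) U3(1) .
  have c0: "(2::int)^v \<noteq> 0" by simp
  have E1: "4 dvd e1 * n * T^2 + d2 * U2^2 - d3 * U3^2"
    by (rule scale_eq[OF _ c0]) (use D in \<open>simp add: D_eqs_def\<close>)
  have E2: "4 dvd e2 * n * T^2 + d3 * U3^2 - d1 * U1^2"
    by (rule scale_eq[OF _ c0]) (use D in \<open>simp add: D_eqs_def\<close>)
  have E3: "4 dvd e3 * n * T^2 + d1 * U1^2 - d2 * U2^2"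
    by (rule scale_eq[OF _ c0]) (use D in \<open>simp add: D_eqs_def\<close>)
  obtain m where m: "d1 * d2 * d3 = m^2" using assms(22) by blast
  have "odd (d1*d2*d3)" using assms(13,16,19) by simp
  then have "odd m" using m by simp
  then have "m^2 mod 4 = 1" using sq_mod4[of m] by blast
  then have prod: "[d1*d2*d3 = 1] (mod 4)" using m unfolding cong_def by simp
  show ?thesis
    by (rule core4[OF assms(5-9) assms(11) assms(13,16,19) prod E1 E2 E3 nz])
qed

end
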